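(* Let $\mathcal{A}=(\Sigma,Q,\delta,q_0,F)$ be a WDBA with $L:=L(\mathcal{A})$ and let $D\subseteq\Sigma^\omega$ be a regular set of don't care words with trivial right-congruence. Then $\mathcal{A}$ is $D$-minimal if and only if $\mathcal{A}$ has informative $D$-congruence.
   Context: A DBA $(\Sigma,Q,\delta,q_0,F)$ is a finite deterministic transition system (all states reachable) with $F\subseteq Q$, accepting $\alpha\in\Sigma^\omega$ iff some state of $F$ is visited infinitely often in the run on $\alpha$. A WDBA is a DBA in which every maximal strongly connected component of states is either contained in $F$ or disjoint from $F$. $L\equiv_D L'$ means $L\setminus D=L'\setminus D$. A WDBA $\mathcal{A}$ is $D$-minimal if there is no WDBA $\mathcal{B}$ with fewer states and $L(\mathcal{B})\equiv_D L(\mathcal{A})$. For $L\subseteq\Sigma^\omega$, $u\sim_L v$ iff for all $\alpha$: $u\alpha\in L\iff v\alpha\in L$; $D$ has trivial right-congruence if $\sim_D$ has exactly one class. $w\sim_{L,D}w'$ iff for all $\alpha\in\Sigma^\omega\setminus D$: $w\alpha\in L\iff w'\alpha\in L$; this is a right-congruence, and $\mathcal{T}_{L,D}$ is its induced transition system (states the classes $[u]$, initial $[\epsilon]$, transitions $[u]\xrightarrow{\sigma}[u\sigma]$). $\mathcal{A}$ has informative $D$-congruence if its transition system is isomorphic to $\mathcal{T}_{L(\mathcal{A}),D}$. *)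

theory Defs
  imports Main "HOL-Library.Omega_Words_Fun"
begin

text \<open>Alphabet: a finite type 'a (so Sigma = UNIV, Sigma^omega = all 'a word).
  A DBA is given by (Q, delta, q0, F) with states of type 'q.\<close>

record ('q, 'a) dba =
  states :: "'q set"
  trans  :: "'q \<Rightarrow> 'a \<Rightarrow> 'q"
  init   :: "'q"
  acc    :: "'q set"

fun trans_star :: "('q \<Rightarrow> 'a \<Rightarrow> 'q) \<Rightarrow> 'q \<Rightarrow> 'a list \<Rightarrow> 'q" where
  "trans_star d q [] = q"
| "trans_star d q (a # u) = trans_star d (d q a) u"

definition is_dba :: "('q, 'a::finite) dba \<Rightarrow> bool" where
  "is_dba A \<longleftrightarrow> finite (states A) \<and> init A \<in> states A
     \<and> (\<forall>q\<in>states A. \<forall>a. trans A q a \<in> states A)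
     \<and> acc A \<subseteq> states A
     \<and> (\<forall>q\<in>states A. \<exists>u. trans_star (trans A) (init A) u = q)"

fun run :: "('q, 'a) dba \<Rightarrow> 'a word \<Rightarrow> nat \<Rightarrow> 'q" where
  "run A w 0 = init A"
| "run A w (Suc n) = trans A (run A w n) (w n)"

definition dba_lang :: "('q, 'a) dba \<Rightarrow> 'a word set" where
  "dba_lang A = {w. \<exists>q\<in>acc A. \<exists>\<^sub>\<infinity> n. run A w n = q}"

definition reach :: "('q, 'a) dba \<Rightarrow> 'q \<Rightarrow> 'q \<Rightarrow> bool" where
  "reach A p q \<longleftrightarrow> (\<exists>u. trans_star (trans A) p u = q)"

definition strongly_connected :: "('q, 'a) dba \<Rightarrow> 'q set \<Rightarrow> bool" where
  "strongly_connected A C \<longleftrightarrow> C \<subseteq> states A \<and> C \<noteq> {} \<and> (\<forall>p\<in>C. \<forall>q\<in>C. reach A p q)"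

definition max_scc :: "('q, 'a) dba \<Rightarrow> 'q set \<Rightarrow> bool" where
  "max_scc A C \<longleftrightarrow> strongly_connected A C
     \<and> (\<forall>C'. strongly_connected A C' \<and> C \<subseteq> C' \<longrightarrow> C' = C)"

definition is_wdba :: "('q, 'a::finite) dba \<Rightarrow> bool" where
  "is_wdba A \<longleftrightarrow> is_dba A \<and> (\<forall>C. max_scc A C \<longrightarrow> C \<subseteq> acc A \<or> C \<inter> acc A = {})"

definition eq_mod :: "'a word set \<Rightarrow> 'a word set \<Rightarrow> 'a word set \<Rightarrow> bool" where
  "eq_mod D L L' \<longleftrightarrow> L - D = L' - D"

text \<open>D-minimality. Competing automata have states of type nat, which is no loss of
  generality since every finite state set can be renamed into nat.\<close>
definition D_minimal :: "'a word set \<Rightarrow> ('q, 'a::finite) dba \<Rightarrow> bool" where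
  "D_minimal D A \<longleftrightarrow>
     \<not> (\<exists>B :: (nat, 'a) dba. is_wdba B \<and> card (states B) < card (states A)
            \<and> eq_mod D (dba_lang B) (dba_lang A))"

text \<open>omega-regular languages: recognised by a nondeterministic Buechi automaton
  (states of type nat, wlog).\<close>
definition nba_accepts ::
  "nat set \<Rightarrow> nat set \<Rightarrow> (nat \<Rightarrow> 'a \<Rightarrow> nat set) \<Rightarrow> nat set \<Rightarrow> 'a word \<Rightarrow> bool" where
  "nba_accepts Q I T F w \<longleftrightarrow>
     (\<exists>r. r 0 \<in> I \<and> (\<forall>n. r n \<in> Q \<and> r (Suc n) \<in> T (r n) (w n))
          \<and> (\<exists>q\<in>F. \<exists>\<^sub>\<infinity> n. r n = q))"

definition omega_regular :: "'a::finite word set \<Rightarrow> bool" where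
  "omega_regular L \<longleftrightarrow>
     (\<exists>Q I T F. finite Q \<and> I \<subseteq> Q \<and> F \<subseteq> Q \<and> (\<forall>q a. T q a \<subseteq> Q)
        \<and> L = {w. nba_accepts Q I T F w})"

definition right_cong :: "'a word set \<Rightarrow> 'a list \<Rightarrow> 'a list \<Rightarrow> bool" where
  "right_cong L u v \<longleftrightarrow> (\<forall>\<alpha>. u \<frown> \<alpha> \<in> L \<longleftrightarrow> v \<frown> \<alpha> \<in> L)"

definition trivial_right_cong :: "'a word set \<Rightarrow> bool" where
  "trivial_right_cong L \<longleftrightarrow> (\<forall>u v. right_cong L u v)"

definition cong_LD :: "'a word set \<Rightarrow> 'a word set \<Rightarrow> ('a list \<times> 'a list) set" where
  "cong_LD L D = {(w, w'). \<forall>\<alpha>. \<alpha> \<notin> D \<longrightarrow> (w \<frown> \<alpha> \<in> L \<longleftrightarrow> w' \<frown> \<alpha> \<in> L)}"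

text \<open>Induced transition system T_{L,D}: states are the classes, initial [eps],
  transitions [u] --a--> [u a] (well defined since cong_LD is a right congruence).\<close>
definition TLD_states :: "'a word set \<Rightarrow> 'a word set \<Rightarrow> 'a list set set" where
  "TLD_states L D = UNIV // cong_LD L D"

definition TLD_init :: "'a word set \<Rightarrow> 'a word set \<Rightarrow> 'a list set" where
  "TLD_init L D = cong_LD L D `` {[]}"

definition TLD_trans :: "'a word set \<Rightarrow> 'a word set \<Rightarrow> 'a list set \<Rightarrow> 'a \<Rightarrow> 'a list set" where
  "TLD_trans L D C a = cong_LD L D `` {(SOME u. u \<in> C) @ [a]}"

definition ts_iso ::
  "'p set \<Rightarrow> ('p \<Rightarrow> 'a \<Rightarrow> 'p) \<Rightarrow> 'p \<Rightarrow> 'r set \<Rightarrow> ('r \<Rightarrow> 'a \<Rightarrow> 'r) \<Rightarrow> 'r \<Rightarrow> bool" where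
  "ts_iso Q d q0 Q' d' q0' \<longleftrightarrow>
     (\<exists>f. bij_betw f Q Q' \<and> f q0 = q0' \<and> (\<forall>q\<in>Q. \<forall>a. f (d q a) = d' (f q) a))"

definition informative_D_cong :: "'a word set \<Rightarrow> ('q, 'a) dba \<Rightarrow> bool" where
  "informative_D_cong D A \<longleftrightarrow>
     ts_iso (states A) (trans A) (init A)
            (TLD_states (dba_lang A) D) (TLD_trans (dba_lang A) D) (TLD_init (dba_lang A) D)"

end

theory Submission
  imports Defs
begin


lemma ts_append: "trans_star d q (u @ v) = trans_star d (trans_star d q u) v"
  by (induction u arbitrary: q) auto

lemma prefix_Suc': "prefix (Suc n) w = prefix n w @ [w n]"
  by simp

lemma run_R: "run A w n = trans_star (trans A) (init A) (prefix n w)"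
  by (induction n) (auto simp: ts_append)

lemma prefix_add: "prefix (m + n) w = prefix m w @ prefix n (suffix m w)"
  using subsequence_append[where i=m and j=n and w=w] subsequence_prefix_suffix[where j="m+n" and i=m and w=w] by simp

lemma R_add: "trans_star d q (prefix (m + n) w) = trans_star d (trans_star d q (prefix m w)) (prefix n (suffix m w))"
  by (simp add: prefix_add ts_append)

lemma INFM_shift: "(\<exists>\<^sub>\<infinity>n. P (k + n)) \<longleftrightarrow> (\<exists>\<^sub>\<infinity>n::nat. P n)"
proof
  assume "\<exists>\<^sub>\<infinity>n. P (k + n)"
  then show "\<exists>\<^sub>\<infinity>n::nat. P n" unfolding INFM_nat_le
    by (metis le_add2 le_trans)
next
  assume h: "\<exists>\<^sub>\<infinity>n::nat. P n"
  show "\<exists>\<^sub>\<infinity>n. P (k + n)" unfolding INFM_nat_le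
  proof
    fix m
    obtain n where "n \<ge> k + m" "P n" using h unfolding INFM_nat_le by blast
    then show "\<exists>n\<ge>m. P (k + n)" by (intro exI[of _ "n - k"]) auto
  qed
qed

lemma conc_lang:
  "u \<frown> \<alpha> \<in> dba_lang B \<longleftrightarrow>
   (\<exists>q\<in>acc B. \<exists>\<^sub>\<infinity>n. trans_star (trans B) (trans_star (trans B) (init B) u) (prefix n \<alpha>) = q)"
proof -
  have "(\<exists>\<^sub>\<infinity>n. run B (u \<frown> \<alpha>) n = q) \<longleftrightarrow> (\<exists>\<^sub>\<infinity>n. run B (u \<frown> \<alpha>) (length u + n) = q)" for q
    by (rule INFM_shift[where P="\<lambda>n. run B (u \<frown> \<alpha>) n = q", symmetric])
  moreover have "\<And>n. run B (u \<frown> \<alpha>) (length u + n) = trans_star (trans B) (trans_star (trans B) (init B) u) (prefix n \<alpha>)"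
    by (simp add: run_R ts_append)
  ultimately show ?thesis unfolding dba_lang_def by simp
qed

lemma conc_lang_same:
  "trans_star (trans B) (init B) u = trans_star (trans B) (init B) v \<Longrightarrow>
   (u \<frown> \<alpha> \<in> dba_lang B \<longleftrightarrow> v \<frown> \<alpha> \<in> dba_lang B)"
  by (simp add: conc_lang)

lemma ts_closed: "is_dba B \<Longrightarrow> p \<in> states B \<Longrightarrow> trans_star (trans B) p u \<in> states B"
  by (induction u arbitrary: p) (auto simp: is_dba_def)

lemma run_closed: "is_dba B \<Longrightarrow> run B w n \<in> states B"
  by (simp add: run_R ts_closed is_dba_def)

lemma reach_refl: "reach B p p"
  unfolding reach_def by (metis trans_star.simps(1))

lemma reach_trans: "reach B p q \<Longrightarrow> reach B q r \<Longrightarrow> reach B p r"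
  unfolding reach_def by (metis ts_append)

lemma wdba_char:
  assumes "is_dba B"
  shows "is_wdba B \<longleftrightarrow> (\<forall>p\<in>states B. \<forall>q. reach B p q \<and> reach B q p \<longrightarrow> (p \<in> acc B \<longleftrightarrow> q \<in> acc B))"
proof
  assume w: "is_wdba B"
  show "\<forall>p\<in>states B. \<forall>q. reach B p q \<and> reach B q p \<longrightarrow> (p \<in> acc B \<longleftrightarrow> q \<in> acc B)"
  proof (intro ballI allI impI)
    fix p q assume p: "p \<in> states B" and pq: "reach B p q \<and> reach B q p"
    define C where "C = {r\<in>states B. reach B p r \<and> reach B r p}"
    have q: "q \<in> C" using pq p assms unfolding C_def reach_def by (auto intro: ts_closed)
    have pC: "p \<in> C" using p reach_refl unfolding C_def by fast
    have sc: "strongly_connected B C"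
      unfolding strongly_connected_def using pC by (auto simp: C_def intro: reach_trans)
    have "max_scc B C"
      unfolding max_scc_def
    proof (intro conjI sc allI impI)
      fix C' assume h: "strongly_connected B C' \<and> C \<subseteq> C'"
      then have "C' \<subseteq> C" using pC unfolding strongly_connected_def C_def by blast
      then show "C' = C" using h by blast
    qed
    then have "C \<subseteq> acc B \<or> C \<inter> acc B = {}" using w unfolding is_wdba_def by blast
    then show "p \<in> acc B \<longleftrightarrow> q \<in> acc B" using pC q by blast
  qed
next
  assume h: "\<forall>p\<in>states B. \<forall>q. reach B p q \<and> reach B q p \<longrightarrow> (p \<in> acc B \<longleftrightarrow> q \<in> acc B)"
  show "is_wdba B" unfolding is_wdba_def
  proof (intro conjI assms allI impI)
    fix C assume "max_scc B C"
    then have sc: "strongly_connected B C" by (simp add: max_scc_def)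
    have "\<And>x y. x \<in> C \<Longrightarrow> y \<in> C \<Longrightarrow> x \<in> acc B \<longleftrightarrow> y \<in> acc B"
      using sc h unfolding strongly_connected_def by blast
    then show "C \<subseteq> acc B \<or> C \<inter> acc B = {}" by blast
  qed
qed

lemma nat_copy:
  fixes B :: "('p, 'a::finite) dba"
  assumes w: "is_wdba B"
  shows "\<exists>C::(nat,'a) dba. is_wdba C \<and> card (states C) = card (states B) \<and> dba_lang C = dba_lang B"
proof -
  have d: "is_dba B" using w by (simp add: is_wdba_def)
  then have fin: "finite (states B)" by (simp add: is_dba_def)
  obtain g :: "'p \<Rightarrow> nat" and n where gi: "inj_on g (states B)"
    using finite_imp_inj_to_nat_seg[OF fin] by blast
  define h where "h = inv_into (states B) g"
  have hg: "\<And>p. p \<in> states B \<Longrightarrow> h (g p) = p" unfolding h_def using gi by simp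
  define C :: "(nat,'a) dba" where "C = \<lparr>states = g ` states B, trans = (\<lambda>i a. g (trans B (h i) a)),
      init = g (init B), acc = g ` acc B\<rparr>"
  have ts: "trans_star (trans C) (g p) u = g (trans_star (trans B) p u)" if "p \<in> states B" for p u
    using that
  proof (induction u arbitrary: p)
    case Nil then show ?case by simp
  next
    case (Cons a u)
    have "trans B p a \<in> states B" using Cons.prems d by (simp add: is_dba_def)
    then show ?case using Cons by (simp add: C_def hg)
  qed
  have run: "run C w k = g (run B w k)" for w k
    by (induction k) (simp_all add: C_def hg run_closed[OF d])
  have dC: "is_dba C"
    unfolding is_dba_def
  proof (intro conjI)
    show "finite (states C)" using fin by (simp add: C_def)
    show "init C \<in> states C" using d by (simp add: C_def is_dba_def)
    show "\<forall>q\<in>states C. \<forall>a. trans C q a \<in> states C" using d by (auto simp: C_def hg is_dba_def)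
    show "acc C \<subseteq> states C" using d by (auto simp: C_def is_dba_def)
    show "\<forall>q\<in>states C. \<exists>u. trans_star (trans C) (init C) u = q"
    proof
      fix i assume "i \<in> states C"
      then obtain p where p: "p \<in> states B" "i = g p" by (auto simp: C_def)
      then obtain u where "trans_star (trans B) (init B) u = p" using d by (auto simp: is_dba_def)
      then have "trans_star (trans C) (init C) u = i"
        using ts[of "init B" u] d p by (simp add: C_def is_dba_def)
      then show "\<exists>u. trans_star (trans C) (init C) u = i" by blast
    qed
  qed
  have reachC: "reach C (g p) j \<Longrightarrow> \<exists>q\<in>states B. j = g q \<and> reach B p q" if "p \<in> states B" for p j
    using ts[OF that] ts_closed[OF d that] unfolding reach_def by metis
  have reachC2: "reach C (g p) (g q) \<Longrightarrow> reach B p q" if "p \<in> states B" "q \<in> states B" for p q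
    using ts[OF that(1)] ts_closed[OF d that(1)] that gi unfolding reach_def by (metis inj_on_eq_iff)
  have accC: "g p \<in> acc C \<longleftrightarrow> p \<in> acc B" if "p \<in> states B" for p
  proof -
    have "acc B \<subseteq> states B" using d by (simp add: is_dba_def)
    then show ?thesis using inj_on_image_mem_iff[OF gi that] by (simp add: C_def)
  qed
  have wC: "is_wdba C"
    unfolding wdba_char[OF dC]
  proof (intro ballI allI impI)
    fix i j assume i: "i \<in> states C" and ij: "reach C i j \<and> reach C j i"
    then obtain p where p: "p \<in> states B" "i = g p" by (auto simp: C_def)
    then obtain q where q: "q \<in> states B" "j = g q" "reach B p q" using reachC ij by blast
    have "reach B q p" using reachC2[OF q(1) p(1)] ij p q by simp
    then have "p \<in> acc B \<longleftrightarrow> q \<in> acc B" using w d p q unfolding wdba_char[OF d] by blast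
    then show "i \<in> acc C \<longleftrightarrow> j \<in> acc C" using accC p q by simp
  qed
  have "card (states C) = card (states B)" using gi by (simp add: C_def card_image)
  moreover have "dba_lang C = dba_lang B"
  proof -
    have accS: "acc B \<subseteq> states B" using d by (simp add: is_dba_def)
    have pw: "\<And>w q k. q \<in> acc B \<Longrightarrow> (g (run B w k) = g q) = (run B w k = q)"
      using inj_on_eq_iff[OF gi] run_closed[OF d] accS by blast
    have aC: "acc C = g ` acc B" by (simp add: C_def)
    show ?thesis
    proof (rule set_eqI)
      fix w
      show "w \<in> dba_lang C \<longleftrightarrow> w \<in> dba_lang B"
        unfolding dba_lang_def run aC using pw by (auto simp del: run.simps)
    qed
  qed
  ultimately show ?thesis using wC by blast
qed

lemma bottom_exists:
  assumes "finite X" "x0 \<in> X" "\<And>x y z. r x y \<Longrightarrow> r y z \<Longrightarrow> r x z" "\<And>x. r x x"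
  shows "\<exists>s\<in>X. \<forall>s'\<in>X. r s s' \<longrightarrow> r s' s"
proof -
  obtain s where s: "s \<in> X" and min: "\<And>y. y \<in> X \<Longrightarrow> card {x\<in>X. r s x} \<le> card {x\<in>X. r y x}"
    using ex_has_least_nat[of "\<lambda>s. s \<in> X" x0 "\<lambda>s. card {x\<in>X. r s x}"] assms(2) by blast
  show ?thesis
  proof (intro bexI[OF _ s] ballI impI)
    fix s' assume s': "s' \<in> X" "r s s'"
    have sub: "{x\<in>X. r s' x} \<subseteq> {x\<in>X. r s x}" using s' assms(3) by blast
    have "card {x\<in>X. r s x} \<le> card {x\<in>X. r s' x}" using min s' by blast
    then have "{x\<in>X. r s' x} = {x\<in>X. r s x}"
      using sub assms(1) by (intro card_seteq) auto
    moreover have "s \<in> {x\<in>X. r s x}" using s assms(4) by blast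
    ultimately show "r s' s" by blast
  qed
qed



locale wctx =
  fixes A :: "('q, 'a::finite) dba" and D :: "'a word set"
  assumes wd: "is_wdba A" and pinv: "\<And>u \<alpha>. u \<frown> \<alpha> \<in> D \<longleftrightarrow> \<alpha> \<in> D"
begin

abbreviation SA where "SA \<equiv> states A"
abbreviation st where "st q u \<equiv> trans_star (trans A) q u"

lemma dA: "is_dba A" using wd by (simp add: is_wdba_def)
lemma finS: "finite SA" using dA by (simp add: is_dba_def)
lemma initS: "init A \<in> SA" using dA by (simp add: is_dba_def)
lemma accS: "acc A \<subseteq> SA" using dA by (simp add: is_dba_def)
lemma stS: "q \<in> SA \<Longrightarrow> st q u \<in> SA" using ts_closed[OF dA] .
lemma reachable: "q \<in> SA \<Longrightarrow> \<exists>u. st (init A) u = q" using dA by (simp add: is_dba_def)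

definition AI where "AI q \<alpha> \<longleftrightarrow> (\<exists>\<^sub>\<infinity>n. st q (prefix n \<alpha>) \<in> acc A)"

definition eqv where "eqv p q \<longleftrightarrow> (\<forall>\<alpha>. \<alpha> \<notin> D \<longrightarrow> (AI p \<alpha> \<longleftrightarrow> AI q \<alpha>))"

lemma eqv_refl: "eqv p p" by (simp add: eqv_def)
lemma eqv_sym: "eqv p q \<Longrightarrow> eqv q p" by (simp add: eqv_def)
lemma eqv_trans: "eqv p q \<Longrightarrow> eqv q r \<Longrightarrow> eqv p r" by (simp add: eqv_def)

lemma AI_conc: "AI q (u \<frown> \<alpha>) \<longleftrightarrow> AI (st q u) \<alpha>"
proof -
  have "AI q (u \<frown> \<alpha>) \<longleftrightarrow> (\<exists>\<^sub>\<infinity>n. st q (prefix (length u + n) (u \<frown> \<alpha>)) \<in> acc A)"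
    unfolding AI_def by (rule INFM_shift[where P="\<lambda>n. st q (prefix n (u \<frown> \<alpha>)) \<in> acc A", symmetric])
  also have "\<dots> \<longleftrightarrow> AI (st q u) \<alpha>" unfolding AI_def by (simp add: ts_append)
  finally show ?thesis .
qed

lemma AI_suffix: "AI q \<alpha> \<longleftrightarrow> AI (st q (prefix m \<alpha>)) (suffix m \<alpha>)"
proof -
  have "AI q \<alpha> = AI q (prefix m \<alpha> \<frown> suffix m \<alpha>)" using prefix_suffix[of \<alpha> m] by simp
  moreover have "AI q (prefix m \<alpha> \<frown> suffix m \<alpha>) = AI (st q (prefix m \<alpha>)) (suffix m \<alpha>)"
    by (rule AI_conc)
  ultimately show ?thesis by simp
qed

lemma D_suffix: "\<alpha> \<notin> D \<Longrightarrow> suffix m \<alpha> \<notin> D"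
  using pinv[of "prefix m \<alpha>" "suffix m \<alpha>"] prefix_suffix[of \<alpha> m] by simp

lemma lang_AI: "w \<in> dba_lang A \<longleftrightarrow> AI (init A) w"
proof -
  have rS: "\<And>n. st (init A) (prefix n w) \<in> SA" using stS initS by blast
  have "w \<in> dba_lang A \<longleftrightarrow> (\<exists>q\<in>acc A. \<exists>\<^sub>\<infinity>n. st (init A) (prefix n w) = q)"
    unfolding dba_lang_def by (simp add: run_R)
  also have "\<dots> \<longleftrightarrow> (\<exists>\<^sub>\<infinity>n. \<exists>q\<in>acc A. st (init A) (prefix n w) = q)"
  proof -
    have fa: "finite (acc A)" using finS accS finite_subset by blast
    show ?thesis
      using INFM_finite_Bex_distrib[OF fa, of "\<lambda>q n. st (init A) (prefix n w) = q"] by simp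
  qed
  also have "\<dots> \<longleftrightarrow> AI (init A) w"
  proof -
    have "\<And>n. (\<exists>q\<in>acc A. st (init A) (prefix n w) = q) \<longleftrightarrow> st (init A) (prefix n w) \<in> acc A" by blast
    then show ?thesis unfolding AI_def by simp
  qed
  finally show ?thesis .
qed

lemma conc_AI: "u \<frown> \<alpha> \<in> dba_lang A \<longleftrightarrow> AI (st (init A) u) \<alpha>"
  unfolding lang_AI by (rule AI_conc)

lemma eqv_st: "eqv p q \<Longrightarrow> eqv (st p u) (st q u)"
  unfolding eqv_def
proof (intro allI impI)
  fix \<alpha> assume h: "\<forall>\<alpha>. \<alpha> \<notin> D \<longrightarrow> (AI p \<alpha> \<longleftrightarrow> AI q \<alpha>)" and a: "\<alpha> \<notin> D"
  have "u \<frown> \<alpha> \<notin> D" using a pinv by simp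
  then show "AI (st p u) \<alpha> \<longleftrightarrow> AI (st q u) \<alpha>" using h AI_conc by metis
qed

definition qreach where "qreach p q \<longleftrightarrow> (\<exists>u. eqv (st p u) q)"

lemma qreach_refl: "qreach p p" unfolding qreach_def using eqv_refl trans_star.simps(1) by metis

lemma qreach_trans: "qreach p q \<Longrightarrow> qreach q r \<Longrightarrow> qreach p r"
proof -
  assume "qreach p q" "qreach q r"
  then obtain u v where u: "eqv (st p u) q" and v: "eqv (st q v) r" unfolding qreach_def by blast
  have "eqv (st p (u @ v)) r" using eqv_st[OF u, of v] v eqv_trans by (simp add: ts_append)
  then show ?thesis unfolding qreach_def by blast
qed

lemma qreach_eqvL: "eqv p p' \<Longrightarrow> qreach p' r \<Longrightarrow> qreach p r"
  unfolding qreach_def using eqv_st eqv_trans by blast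

lemma qreach_eqvR: "qreach p q \<Longrightarrow> eqv q q' \<Longrightarrow> qreach p q'"
  unfolding qreach_def using eqv_trans by blast

lemma qreach_eq: "st p u = q \<Longrightarrow> qreach p q"
  unfolding qreach_def using eqv_refl by blast

lemma Rec:
  assumes "\<exists>\<^sub>\<infinity>n. st q (prefix n \<alpha>) = p"
  shows "qreach (st q (prefix i \<alpha>)) p"
proof -
  obtain j where j: "j \<ge> i" "st q (prefix j \<alpha>) = p" using assms unfolding INFM_nat_le by blast
  then have "st (st q (prefix i \<alpha>)) (prefix (j - i) (suffix i \<alpha>)) = p"
    using R_add[where d="trans A" and q=q and m=i and n="j - i" and w=\<alpha>] by simp
  then show ?thesis using qreach_eq by blast
qed

lemma wchar:
  assumes "p \<in> SA" "reach A p q" "reach A q p" shows "p \<in> acc A \<longleftrightarrow> q \<in> acc A"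
proof -
  have H: "\<forall>p\<in>SA. \<forall>q. reach A p q \<and> reach A q p \<longrightarrow> (p \<in> acc A \<longleftrightarrow> q \<in> acc A)"
    using wd wdba_char[OF dA] by simp
  show ?thesis using H[rule_format, OF assms(1), of q] assms(2,3) by simp
qed

lemma K:
  assumes p1: "p1 \<in> SA" and a1D: "\<alpha>1 \<notin> D" and a1: "AI p1 \<alpha>1"
    and r1: "\<forall>k. qreach (st p1 (prefix k \<alpha>1)) p1"
    and a2D: "\<alpha>2 \<notin> D" and a2: "\<not> AI p2 \<alpha>2"
    and r2: "\<forall>k. qreach (st p2 (prefix k \<alpha>2)) p1"
    and p12: "qreach p1 p2"
  shows False
proof -
  define X where "X = {s\<in>SA. qreach s p1}"
  have finX: "finite X" using finS unfolding X_def by simp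
  have p1X: "p1 \<in> X" using p1 qreach_refl unfolding X_def by blast
  have stepF: "\<exists>t. st s t \<in> X \<and> st s t \<in> acc A" if s: "s \<in> X" for s
  proof -
    obtain z where z: "eqv (st s z) p1" using s unfolding X_def qreach_def by blast
    have "AI (st s z) \<alpha>1" using z a1 a1D unfolding eqv_def by blast
    then obtain n where n: "st (st s z) (prefix n \<alpha>1) \<in> acc A" unfolding AI_def using INFM_EX by blast
    have e: "eqv (st (st s z) (prefix n \<alpha>1)) (st p1 (prefix n \<alpha>1))" using eqv_st[OF z] .
    have "qreach (st (st s z) (prefix n \<alpha>1)) p1" using qreach_eqvL[OF e] r1 by blast
    moreover have "st (st s z) (prefix n \<alpha>1) \<in> SA" using s stS unfolding X_def by blast
    ultimately show ?thesis using n unfolding X_def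
      by (intro exI[of _ "z @ prefix n \<alpha>1"]) (simp add: ts_append)
  qed
  have stepN: "\<exists>t. st s t \<in> X \<and> st s t \<notin> acc A" if s: "s \<in> X" for s
  proof -
    have "qreach s p2" using s p12 qreach_trans unfolding X_def by blast
    then obtain z where z: "eqv (st s z) p2" unfolding qreach_def by blast
    have "\<not> AI (st s z) \<alpha>2" using z a2 a2D unfolding eqv_def by blast
    then have "\<forall>\<^sub>\<infinity>n. st (st s z) (prefix n \<alpha>2) \<notin> acc A" unfolding AI_def by simp
    then obtain n where n: "st (st s z) (prefix n \<alpha>2) \<notin> acc A" unfolding MOST_nat by blast
    have e: "eqv (st (st s z) (prefix n \<alpha>2)) (st p2 (prefix n \<alpha>2))" using eqv_st[OF z] .
    have "qreach (st (st s z) (prefix n \<alpha>2)) p1" using qreach_eqvL[OF e] r2 by blast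
    moreover have "st (st s z) (prefix n \<alpha>2) \<in> SA" using s stS unfolding X_def by blast
    ultimately show ?thesis using n unfolding X_def
      by (intro exI[of _ "z @ prefix n \<alpha>2"]) (simp add: ts_append)
  qed
  have "\<exists>s\<in>X. \<forall>s'\<in>X. reach A s s' \<longrightarrow> reach A s' s"
  proof (rule bottom_exists[OF finX p1X, where r="reach A"])
    show "\<And>x y z. reach A x y \<Longrightarrow> reach A y z \<Longrightarrow> reach A x z" by (rule reach_trans)
    show "\<And>x. reach A x x" by (rule reach_refl)
  qed
  then obtain s where s: "s \<in> X" and bot: "\<forall>s'\<in>X. reach A s s' \<longrightarrow> reach A s' s" by blast
  obtain t1 where t1: "st s t1 \<in> X" "st s t1 \<in> acc A" using stepF[OF s] by blast
  obtain t2 where t2: "st s t2 \<in> X" "st s t2 \<notin> acc A" using stepN[OF s] by blast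
  have r1s: "reach A s (st s t1)" unfolding reach_def by (rule exI[of _ t1]) (rule refl)
  have r2s: "reach A s (st s t2)" unfolding reach_def by (rule exI[of _ t2]) (rule refl)
  have b1: "reach A (st s t1) s" using bot[rule_format, OF t1(1) r1s] .
  have b2: "reach A (st s t2) s" using bot[rule_format, OF t2(1) r2s] .
  have c1: "reach A (st s t1) (st s t2)" using reach_trans[OF b1 r2s] .
  have c2: "reach A (st s t2) (st s t1)" using reach_trans[OF b2 r1s] .
  have "st s t1 \<in> SA" using t1 unfolding X_def by blast
  then have "st s t1 \<in> acc A \<longleftrightarrow> st s t2 \<in> acc A" using wchar c1 c2 by blast
  then show False using t1 t2 by simp
qed

end


context wctx begin

definition rep where "rep q = (SOME r. r \<in> SA \<and> eqv r q)"

lemma rep: "q \<in> SA \<Longrightarrow> rep q \<in> SA \<and> eqv (rep q) q"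
  unfolding rep_def by (rule someI[of _ q]) (simp add: eqv_refl)

lemma rep_eq:
  assumes "p \<in> SA" "q \<in> SA" shows "rep p = rep q \<longleftrightarrow> eqv p q"
proof
  assume "rep p = rep q"
  then show "eqv p q" using rep[OF assms(1)] rep[OF assms(2)] eqv_sym eqv_trans by metis
next
  assume pq: "eqv p q"
  have "(\<lambda>r. r \<in> SA \<and> eqv r p) = (\<lambda>r. r \<in> SA \<and> eqv r q)" using pq eqv_sym eqv_trans by blast
  then show "rep p = rep q" unfolding rep_def by simp
qed

lemma rep_rep: "q \<in> SA \<Longrightarrow> rep (rep q) = rep q"
  using rep_eq rep by blast

lemma transS: "q \<in> SA \<Longrightarrow> trans A q a \<in> SA"
  using dA by (simp add: is_dba_def)

definition Bq :: "('q, 'a) dba" where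
  "Bq = \<lparr>states = rep ` SA, trans = (\<lambda>r a. rep (trans A r a)), init = rep (init A),
     acc = {r \<in> rep ` SA. \<exists>p1\<in>SA. \<exists>\<alpha>1. \<alpha>1 \<notin> D \<and> AI p1 \<alpha>1 \<and> (\<forall>k. qreach (st p1 (prefix k \<alpha>1)) p1)
              \<and> qreach r p1 \<and> qreach p1 r}\<rparr>"

lemma Bq_simps:
  "states Bq = rep ` SA" "trans Bq = (\<lambda>r a. rep (trans A r a))" "init Bq = rep (init A)"
  "acc Bq = {r \<in> rep ` SA. \<exists>p1\<in>SA. \<exists>\<alpha>1. \<alpha>1 \<notin> D \<and> AI p1 \<alpha>1 \<and> (\<forall>k. qreach (st p1 (prefix k \<alpha>1)) p1)
              \<and> qreach r p1 \<and> qreach p1 r}"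
  by (simp_all add: Bq_def)

lemma rep_step: "x \<in> SA \<Longrightarrow> rep (trans A (rep x) a) = rep (trans A x a)"
proof -
  assume x: "x \<in> SA"
  have "eqv (st (rep x) [a]) (st x [a])" using eqv_st rep[OF x] by blast
  then show ?thesis using rep_eq transS rep[OF x] x by simp
qed

lemma Bq_ts: "r \<in> rep ` SA \<Longrightarrow> trans_star (trans Bq) r u = rep (st r u)"
proof (induction u arbitrary: r)
  case Nil
  then show ?case using rep_rep by auto
next
  case (Cons a u)
  obtain q where q: "q \<in> SA" "r = rep q" using Cons.prems by blast
  have rS: "r \<in> SA" using q rep by blast
  have "trans_star (trans Bq) r (a # u) = trans_star (trans Bq) (rep (trans A r a)) u"
    by (simp add: Bq_simps)
  also have "\<dots> = rep (st (rep (trans A r a)) u)"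
    using Cons.IH transS[OF rS] by blast
  also have "\<dots> = rep (st (trans A r a) u)"
  proof -
    have tS: "trans A r a \<in> SA" using transS[OF rS] .
    have "eqv (st (rep (trans A r a)) u) (st (trans A r a) u)" using eqv_st rep[OF tS] by blast
    then show ?thesis using rep_eq stS rep[OF tS] tS by blast
  qed
  finally show ?case by simp
qed

lemma runS: "run A w n \<in> SA" using run_closed[OF dA] .

lemma Bq_run: "run Bq w n = rep (run A w n)"
proof (induction n)
  case 0 then show ?case by (simp add: Bq_simps)
next
  case (Suc n)
  then show ?case using rep_step[OF runS] by (simp add: Bq_simps)
qed

lemma Bq_dba: "is_dba Bq"
  unfolding is_dba_def
proof (intro conjI)
  show "finite (states Bq)" using finS by (simp add: Bq_simps)
  show "init Bq \<in> states Bq" using initS by (simp add: Bq_simps)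
  show "\<forall>q\<in>states Bq. \<forall>a. trans Bq q a \<in> states Bq" using transS rep by (auto simp: Bq_simps)
  show "acc Bq \<subseteq> states Bq" by (auto simp: Bq_simps)
  show "\<forall>q\<in>states Bq. \<exists>u. trans_star (trans Bq) (init Bq) u = q"
  proof
    fix r assume "r \<in> states Bq"
    then obtain q where q: "q \<in> SA" "r = rep q" by (auto simp: Bq_simps)
    obtain u where u: "st (init A) u = q" using reachable[OF q(1)] by blast
    have "trans_star (trans Bq) (init Bq) u = rep (st (rep (init A)) u)"
      using Bq_ts initS by (simp add: Bq_simps)
    also have "\<dots> = rep (st (init A) u)"
    proof -
      have "eqv (st (rep (init A)) u) (st (init A) u)" using eqv_st rep[OF initS] by blast
      then show ?thesis using rep_eq stS rep[OF initS] initS by blast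
    qed
    finally show "\<exists>u. trans_star (trans Bq) (init Bq) u = r" using u q by blast
  qed
qed

lemma Bq_reach:
  assumes "r \<in> rep ` SA" "reach Bq r r'"
  shows "r' \<in> rep ` SA \<and> qreach r r'"
proof -
  obtain u where u: "rep (st r u) = r'" using assms Bq_ts unfolding reach_def by metis
  have rS: "r \<in> SA" using assms(1) rep by blast
  have xS: "st r u \<in> SA" using stS[OF rS] .
  have "eqv (st r u) r'" using rep[OF xS] u eqv_sym by blast
  then show ?thesis using u xS unfolding qreach_def by blast
qed

lemma Bq_acc_mono:
  assumes "r \<in> acc Bq" "r' \<in> rep ` SA" "qreach r r'" "qreach r' r"
  shows "r' \<in> acc Bq"
  using assms qreach_trans unfolding Bq_simps by blast

lemma Bq_wdba: "is_wdba Bq"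
  unfolding wdba_char[OF Bq_dba]
proof (intro ballI allI impI)
  fix r r' assume r: "r \<in> states Bq" and rr: "reach Bq r r' \<and> reach Bq r' r"
  have r1: "r \<in> rep ` SA" using r by (simp add: Bq_simps)
  have h1: "r' \<in> rep ` SA" "qreach r r'" using Bq_reach[OF r1] rr by blast+
  have h2: "qreach r' r" using Bq_reach[OF h1(1)] rr by blast
  show "r \<in> acc Bq \<longleftrightarrow> r' \<in> acc Bq"
    using Bq_acc_mono[OF _ h1 h2] Bq_acc_mono[OF _ r1 h2 h1(2)] by blast
qed

lemma Bq_lang:
  assumes aD: "\<alpha> \<notin> D"
  shows "\<alpha> \<in> dba_lang Bq \<longleftrightarrow> \<alpha> \<in> dba_lang A"
proof -
  define x where "x n = st (init A) (prefix n \<alpha>)" for n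
  have xS: "x n \<in> SA" for n unfolding x_def using stS initS by blast
  have LB: "\<alpha> \<in> dba_lang Bq \<longleftrightarrow> (\<exists>r\<in>acc Bq. \<exists>\<^sub>\<infinity>n. rep (x n) = r)"
    unfolding dba_lang_def Bq_run by (simp add: x_def run_R)
  have LA: "\<alpha> \<in> dba_lang A \<longleftrightarrow> AI (init A) \<alpha>" using lang_AI .
  have xadd: "st (x m) (prefix k (suffix m \<alpha>)) = x (m + k)" for m k
    unfolding x_def using R_add[where d="trans A" and q="init A" and m=m and n=k and w=\<alpha>] by simp
  have pig: "\<exists>p\<in>SA. \<exists>\<^sub>\<infinity>n. x n = p \<and> P p" if "\<exists>\<^sub>\<infinity>n. P (x n)" for P
  proof -
    have "\<exists>\<^sub>\<infinity>n. \<exists>p\<in>SA. x n = p \<and> P p" using that by (rule INFM_mono) (use xS in blast)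
    then show ?thesis using INFM_finite_Bex_distrib[OF finS, of "\<lambda>p n. x n = p \<and> P p"] by simp
  qed
  show ?thesis
  proof
    assume "\<alpha> \<in> dba_lang A"
    then have ai: "AI (init A) \<alpha>" using LA by simp
    have "\<exists>\<^sub>\<infinity>n. (\<lambda>p. True) (x n)" by simp
    then obtain p1 where p1: "p1 \<in> SA" "\<exists>\<^sub>\<infinity>n. x n = p1" using pig by fastforce
    then obtain m where m: "x m = p1" using INFM_EX by blast
    define \<alpha>1 where "\<alpha>1 = suffix m \<alpha>"
    have a1: "AI p1 \<alpha>1" using ai AI_suffix[of "init A" \<alpha> m] m unfolding \<alpha>1_def x_def by simp
    have a1D: "\<alpha>1 \<notin> D" using D_suffix[OF aD] unfolding \<alpha>1_def .
    have r1: "\<forall>k. qreach (st p1 (prefix k \<alpha>1)) p1"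
    proof
      fix k
      have "st p1 (prefix k \<alpha>1) = x (m + k)" using xadd[of m k] m unfolding \<alpha>1_def by simp
      then show "qreach (st p1 (prefix k \<alpha>1)) p1" using Rec[of "init A" \<alpha> p1 "m + k"] p1(2)
        unfolding x_def by simp
    qed
    have e: "eqv (rep p1) p1" using rep[OF p1(1)] by blast
    have q1: "qreach (rep p1) p1" using qreach_eqvL[OF e qreach_refl] .
    have q2: "qreach p1 (rep p1)" using qreach_eqvR[OF qreach_refl eqv_sym[OF e]] .
    have "rep p1 \<in> acc Bq" unfolding Bq_simps using p1(1) a1D a1 r1 q1 q2 by blast
    moreover have "\<exists>\<^sub>\<infinity>n. rep (x n) = rep p1" using p1(2) by (rule INFM_mono) simp
    ultimately show "\<alpha> \<in> dba_lang Bq" using LB by blast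
  next
    assume "\<alpha> \<in> dba_lang Bq"
    then obtain r where r: "r \<in> acc Bq" "\<exists>\<^sub>\<infinity>n. rep (x n) = r" using LB by blast
    obtain p2 where p2: "p2 \<in> SA" "\<exists>\<^sub>\<infinity>n. x n = p2 \<and> rep p2 = r"
      using pig[of "\<lambda>p. rep p = r"] r(2) by blast
    have rp2: "rep p2 = r" using p2(2) INFM_EX by blast
    have p2i: "\<exists>\<^sub>\<infinity>n. x n = p2" using p2(2) by (rule INFM_mono) simp
    obtain m where m: "x m = p2" using p2i INFM_EX by blast
    obtain p1 \<alpha>1 where p1: "p1 \<in> SA" "\<alpha>1 \<notin> D" "AI p1 \<alpha>1" "\<forall>k. qreach (st p1 (prefix k \<alpha>1)) p1"
      "qreach r p1" "qreach p1 r"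
      using r(1) unfolding Bq_simps by blast
    have e: "eqv p2 r" using rep[OF p2(1)] rp2 eqv_sym by blast
    show "\<alpha> \<in> dba_lang A"
    proof (rule ccontr)
      assume "\<alpha> \<notin> dba_lang A"
      then have nai: "\<not> AI (init A) \<alpha>" using LA by simp
      define \<alpha>2 where "\<alpha>2 = suffix m \<alpha>"
      have a2: "\<not> AI p2 \<alpha>2" using nai AI_suffix[of "init A" \<alpha> m] m unfolding \<alpha>2_def x_def by simp
      have a2D: "\<alpha>2 \<notin> D" using D_suffix[OF aD] unfolding \<alpha>2_def .
      have p2p1: "qreach p2 p1" using qreach_eqvL[OF e p1(5)] .
      have r2: "\<forall>k. qreach (st p2 (prefix k \<alpha>2)) p1"
      proof
        fix k
        have "st p2 (prefix k \<alpha>2) = x (m + k)" using xadd[of m k] m unfolding \<alpha>2_def by simp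
        then have "qreach (st p2 (prefix k \<alpha>2)) p2" using Rec[of "init A" \<alpha> p2 "m + k"] p2i
          unfolding x_def by simp
        then show "qreach (st p2 (prefix k \<alpha>2)) p1" using p2p1 qreach_trans by blast
      qed
      have p12: "qreach p1 p2" using qreach_eqvR[OF p1(6) eqv_sym[OF e]] .
      show False using K[OF p1(1) p1(2) p1(3) p1(4) a2D a2 r2 p12] .
    qed
  qed
qed

lemma card_Bq:
  assumes "p \<in> SA" "q \<in> SA" "p \<noteq> q" "eqv p q"
  shows "card (states Bq) < card SA"
proof -
  have "\<not> inj_on rep SA" using assms rep_eq unfolding inj_on_def by blast
  then have "card (rep ` SA) \<noteq> card SA" using inj_on_iff_eq_card[OF finS] by blast
  moreover have "card (rep ` SA) \<le> card SA" using card_image_le[OF finS] .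
  ultimately show ?thesis by (simp add: Bq_simps)
qed

lemma minimal_inj:
  assumes "D_minimal D A" "p \<in> SA" "q \<in> SA" "eqv p q"
  shows "p = q"
proof (rule ccontr)
  assume "p \<noteq> q"
  then have c: "card (states Bq) < card SA" using card_Bq assms by blast
  obtain C :: "(nat, 'a) dba" where C: "is_wdba C" "card (states C) = card (states Bq)"
    "dba_lang C = dba_lang Bq"
    using nat_copy[OF Bq_wdba] by blast
  have "eq_mod D (dba_lang C) (dba_lang A)"
    unfolding eq_mod_def C(3) using Bq_lang by blast
  then have "is_wdba C \<and> card (states C) < card SA \<and> eq_mod D (dba_lang C) (dba_lang A)"
    using C c by simp
  then show False using assms(1) unfolding D_minimal_def by blast
qed

end


context wctx begin

lemma E_iff: "(u, v) \<in> cong_LD (dba_lang A) D \<longleftrightarrow> eqv (st (init A) u) (st (init A) v)"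
  unfolding cong_LD_def eqv_def by (simp add: conc_AI)

lemma informative:
  assumes inj: "\<forall>p\<in>SA. \<forall>q\<in>SA. eqv p q \<longrightarrow> p = q"
  shows "informative_D_cong D A"
proof -
  let ?E = "cong_LD (dba_lang A) D"
  define f where "f q = {v. eqv q (st (init A) v)}" for q
  have Eimg: "?E `` {u} = f (st (init A) u)" for u
    unfolding f_def using E_iff by auto
  have stS0: "st (init A) u \<in> SA" for u using stS initS by blast
  have rng: "range (st (init A)) = SA" using stS0 reachable by blast
  have injf: "inj_on f SA"
  proof
    fix p q assume pq: "p \<in> SA" "q \<in> SA" "f p = f q"
    obtain u where u: "st (init A) u = q" using reachable pq(2) by blast
    have "u \<in> f q" unfolding f_def using u eqv_refl by simp
    then have "u \<in> f p" using pq by simp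
    then have "eqv p q" unfolding f_def using u by simp
    then show "p = q" using inj pq by blast
  qed
  have img: "f ` SA = UNIV // ?E"
  proof -
    have "UNIV // ?E = (\<lambda>u. ?E `` {u}) ` UNIV" unfolding quotient_def by blast
    also have "\<dots> = (\<lambda>u. f (st (init A) u)) ` UNIV" using Eimg by simp
    also have "\<dots> = f ` range (st (init A))" by (simp add: image_image)
    finally show ?thesis using rng by simp
  qed
  have bij: "bij_betw f SA (TLD_states (dba_lang A) D)"
    unfolding TLD_states_def bij_betw_def using injf img by simp
  have i0: "f (init A) = TLD_init (dba_lang A) D"
    unfolding TLD_init_def using Eimg[of "[]"] by simp
  have tr: "f (trans A q a) = TLD_trans (dba_lang A) D (f q) a" if q: "q \<in> SA" for q a
  proof -
    obtain u where u: "st (init A) u = q" using reachable q by blast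
    have "u \<in> f q" unfolding f_def using u eqv_refl by simp
    then have v: "(SOME u. u \<in> f q) \<in> f q" by (rule someI)
    define v where "v = (SOME u. u \<in> f q)"
    have "eqv q (st (init A) v)" using v unfolding v_def f_def by simp
    then have sv: "st (init A) v = q" using inj q stS0 by metis
    have "TLD_trans (dba_lang A) D (f q) a = ?E `` {v @ [a]}"
      unfolding TLD_trans_def v_def by simp
    also have "\<dots> = f (st (init A) (v @ [a]))" by (rule Eimg)
    also have "\<dots> = f (trans A q a)" using sv by (simp add: ts_append)
    finally show ?thesis by simp
  qed
  show ?thesis
    unfolding informative_D_cong_def ts_iso_def using bij i0 tr by blast
qed

lemma informative_minimal:
  assumes inf: "informative_D_cong D A"
  shows "D_minimal D A"
proof -
  let ?E = "cong_LD (dba_lang A) D"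
  obtain f where f: "bij_betw f SA (UNIV // ?E)"
    using inf unfolding informative_D_cong_def ts_iso_def TLD_states_def by blast
  have cardE: "card SA = card (UNIV // ?E)" using bij_betw_same_card[OF f] .
  show ?thesis unfolding D_minimal_def
  proof
    assume "\<exists>B :: (nat, 'a) dba. is_wdba B \<and> card (states B) < card SA \<and> eq_mod D (dba_lang B) (dba_lang A)"
    then obtain B :: "(nat, 'a) dba" where B: "is_wdba B" "card (states B) < card SA"
      "eq_mod D (dba_lang B) (dba_lang A)" by blast
    have dB: "is_dba B" using B(1) by (simp add: is_wdba_def)
    have finB: "finite (states B)" using dB by (simp add: is_dba_def)
    let ?EB = "cong_LD (dba_lang B) D"
    have EE: "?E = ?EB"
    proof -
      have "\<And>u \<alpha>. \<alpha> \<notin> D \<Longrightarrow> u \<frown> \<alpha> \<in> dba_lang A \<longleftrightarrow> u \<frown> \<alpha> \<in> dba_lang B"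
      proof -
        fix u \<alpha> assume "\<alpha> \<notin> D"
        then have "u \<frown> \<alpha> \<notin> D" using pinv by simp
        then show "u \<frown> \<alpha> \<in> dba_lang A \<longleftrightarrow> u \<frown> \<alpha> \<in> dba_lang B"
          using B(3) unfolding eq_mod_def by blast
      qed
      then show ?thesis unfolding cong_LD_def by auto
    qed
    define tB where "tB u = trans_star (trans B) (init B) u" for u
    define g where "g q = ?EB `` {SOME u. tB u = q}" for q
    have sub: "UNIV // ?EB \<subseteq> g ` states B"
    proof
      fix X assume "X \<in> UNIV // ?EB"
      then obtain u where X: "X = ?EB `` {u}" unfolding quotient_def by blast
      define u' where "u' = (SOME v. tB v = tB u)"
      have u': "tB u' = tB u" unfolding u'_def by (rule someI) (rule refl)
      have "?EB `` {u} = ?EB `` {u'}"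
        using conc_lang_same[of B u u'] u' unfolding tB_def cong_LD_def by auto
      moreover have "tB u \<in> states B" unfolding tB_def
        using ts_closed[OF dB] dB by (simp add: is_dba_def)
      ultimately show "X \<in> g ` states B" unfolding g_def X u'_def by blast
    qed
    have "card (UNIV // ?EB) \<le> card (g ` states B)"
      using sub finB by (simp add: card_mono)
    also have "\<dots> \<le> card (states B)" using card_image_le[OF finB] .
    finally have "card SA \<le> card (states B)" using cardE EE by simp
    then show False using B(2) by simp
  qed
qed

end

theorem theorem4:
  fixes A :: "('q, 'a::finite) dba" and D :: "'a word set"
  assumes "is_wdba A"
    and "omega_regular D"
    and "trivial_right_cong D"
  shows "D_minimal D A \<longleftrightarrow> informative_D_cong D A"
proof -
  have pinv: "\<And>u \<alpha>. u \<frown> \<alpha> \<in> D \<longleftrightarrow> \<alpha> \<in> D"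
  proof -
    fix u \<alpha>
    have "right_cong D u []" using assms(3) unfolding trivial_right_cong_def by blast
    then show "u \<frown> \<alpha> \<in> D \<longleftrightarrow> \<alpha> \<in> D" unfolding right_cong_def by simp
  qed
  interpret wctx A D using assms(1) pinv by unfold_locales auto
  show ?thesis
  proof
    assume m: "D_minimal D A"
    show "informative_D_cong D A"
      using informative minimal_inj[OF m] by blast
  next
    assume "informative_D_cong D A"
    then show "D_minimal D A" by (rule informative_minimal)
  qed
qed


end
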